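(* Let $k\ge2$ and $n\le-(k-1)$. Then $$\mathcal{F}_{n,k}(x)=\sum_{t=0}^{\lfloor(|n|+1-k)/k\rfloor}C_k\bigl(-(1+t),\,|n|+1-k(1+t)\bigr)\,x^{|n|+1-k(1+t)}.$$
   Context: For $k\ge2$, the polynomials $\mathcal{F}_{n,k}(x)\in\mathbb{Z}[x]$ ($n\in\mathbb{Z}$) are defined by $\mathcal{F}_{1,k}=1$, $\mathcal{F}_{n,k}=0$ for $n=0,-1,\dots,-(k-2)$, and $\mathcal{F}_{n,k}(x)=\sum_{j=1}^{k}x^{k-j}\mathcal{F}_{n-j,k}(x)$ for all $n\in\mathbb{Z}$. This recurrence is used upwards for $n\ge2$, and downwards for $n\le-(k-1)$ as $\mathcal{F}_{n,k}=\mathcal{F}_{n+k,k}-\sum_{j=1}^{k-1}x^j\mathcal{F}_{n+j,k}$. For integers $m<0$ and $j\ge0$, $C_k(m,j)$ denotes the coefficient of $x^j$ in the formal power series $(1+x+\dots+x^{k-1})^{m}=1/(1+x+\dots+x^{k-1})^{|m|}$. *)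

theory Defs
  imports "HOL-Computational_Algebra.Polynomial" "HOL-Computational_Algebra.Formal_Power_Series"
begin

text \<open>Upward part: Fup k m = F_{m+1,k} for m >= 0, using
  F_{n,k} = sum_{j=1..k} x^(k-j) F_{n-j,k} and F_{n,k} = 0 for -(k-2) <= n <= 0.\<close>
fun Fup :: "nat \<Rightarrow> nat \<Rightarrow> int poly" where
  "Fup k m = (if m = 0 then 1 else
     (\<Sum>j\<in>{1..k}. if j \<le> m then monom 1 (k - j) * Fup k (m - j) else 0))"

text \<open>Downward part: Fneg k i = F_{1-i,k} for i >= 0, using
  F_{n,k} = F_{n+k,k} - sum_{j=1..k-1} x^j F_{n+j,k} for n <= -(k-1). (The k = 0 guard is only for termination; k >= 2 throughout.)\<close>
fun Fneg :: "nat \<Rightarrow> nat \<Rightarrow> int poly" where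
  "Fneg k i = (if i = 0 then 1 else if i < k \<or> k = 0 then 0 else
     Fneg k (i - k) - (\<Sum>j\<in>{1..k-1}. monom 1 j * Fneg k (i - j)))"

definition F :: "nat \<Rightarrow> int \<Rightarrow> int poly" where
  "F k n = (if n \<ge> 1 then Fup k (nat (n - 1)) else Fneg k (nat (1 - n)))"

definition C :: "nat \<Rightarrow> int \<Rightarrow> nat \<Rightarrow> rat" where
  "C k m j = fps_nth (inverse ((\<Sum>i<k. fps_X ^ i) ^ nat (- m))) j"

end

theory Submission
  imports Defs
begin

definition PP :: "nat \<Rightarrow> rat fps" where "PP k = (\<Sum>i<k. fps_X ^ i)"
definition DD :: "nat \<Rightarrow> nat \<Rightarrow> nat \<Rightarrow> rat" where "DD k t m = fps_nth (inverse (PP k ^ t)) m"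
definition hh :: "nat \<Rightarrow> nat \<Rightarrow> nat \<Rightarrow> rat" where
  "hh k i e = (if e \<le> i \<and> k dvd (i - e) then DD k ((i - e) div k) e else 0)"

lemma PP_nth: "fps_nth (PP k) n = (if n < k then 1 else 0)"
  unfolding PP_def fps_sum_nth fps_X_power_nth by (simp add: sum.delta)

lemma DD0: "DD k 0 m = (if m = 0 then 1 else 0)"
  unfolding DD_def by simp

lemma DDrec:
  assumes "k \<ge> 1" "t \<ge> 1"
  shows "(\<Sum>j=0..m. if j < k then DD k t (m - j) else 0) = DD k (t - 1) m"
proof -
  have P0: "fps_nth (PP k) 0 \<noteq> 0" using assms by (simp add: PP_nth)
  have "PP k ^ t = PP k * PP k ^ (t - 1)" using assms
    by (metis Suc_diff_le diff_Suc_1 power_Suc)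
  hence "inverse (PP k ^ t) = inverse (PP k) * inverse (PP k ^ (t-1))"
    by (simp add: fps_inverse_mult)
  hence "PP k * inverse (PP k ^ t) = inverse (PP k ^ (t-1))"
    using inverse_mult_eq_1'[OF P0] by (simp add: mult.assoc[symmetric])
  hence "DD k (t - 1) m = fps_nth (PP k * inverse (PP k ^ t)) m"
    unfolding DD_def by simp
  also have "\<dots> = (\<Sum>j=0..m. fps_nth (PP k) j * DD k t (m - j))"
    unfolding fps_mult_nth DD_def by simp
  also have "\<dots> = (\<Sum>j=0..m. if j < k then DD k t (m - j) else 0)"
    by (rule sum.cong) (auto simp: PP_nth)
  finally show ?thesis by simp
qed

lemma hhrec:
  assumes k: "k \<ge> 2" and ki: "k \<le> i"
  shows "hh k i e + (\<Sum>j\<in>{1..k-1}. if j \<le> e then hh k (i - j) (e - j) else 0) = hh k (i - k) e"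
proof -
  define S where "S = (\<Sum>j=0..e. if j < k then hh k (i - j) (e - j) else 0)"
  have "S = (\<Sum>j\<in>{j\<in>{0..e}. j < k}. hh k (i - j) (e - j))"
    unfolding S_def by (rule sum.inter_filter[symmetric]) simp
  also have "{j\<in>{0..e}. j < k} = {j\<in>{..<k}. j \<le> e}" by auto
  also have "(\<Sum>j\<in>{j\<in>{..<k}. j \<le> e}. hh k (i - j) (e - j))
      = (\<Sum>j<k. if j \<le> e then hh k (i - j) (e - j) else 0)"
    by (rule sum.inter_filter) simp
  also have "{..<k} = insert 0 {1..k-1}" using k by auto
  also have "(\<Sum>j\<in>insert 0 {1..k-1}. if j \<le> e then hh k (i - j) (e - j) else 0)
     = hh k i e + (\<Sum>j\<in>{1..k-1}. if j \<le> e then hh k (i - j) (e - j) else 0)"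
    by (subst sum.insert) auto
  finally have S1: "S = hh k i e + (\<Sum>j\<in>{1..k-1}. if j \<le> e then hh k (i - j) (e - j) else 0)" .
  have S2: "S = hh k (i - k) e"
  proof (cases "e \<le> i \<and> k dvd (i - e)")
    case True
    define t where "t = (i - e) div k"
    have ie: "i - e = k * t" using True t_def by auto
    have SD: "S = (\<Sum>j=0..e. if j < k then DD k t (e - j) else 0)"
      unfolding S_def
    proof (rule sum.cong)
      fix j assume j: "j \<in> {0..e}"
      show "(if j < k then hh k (i - j) (e - j) else 0) = (if j < k then DD k t (e - j) else 0)"
      proof (cases "j < k")
        case True
        have "i - j - (e - j) = i - e" using j \<open>e \<le> i \<and> k dvd (i - e)\<close> by auto
        moreover have "e - j \<le> i - j" using j \<open>e \<le> i \<and> k dvd (i - e)\<close> by auto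
        ultimately show ?thesis using True \<open>e \<le> i \<and> k dvd (i - e)\<close> unfolding hh_def t_def by simp
      qed simp
    qed simp
    show ?thesis
    proof (cases "t = 0")
      case t0: True
      hence "e = i" using ie True by auto
      have "S = 0" unfolding SD
      proof (rule sum.neutral, intro ballI)
        fix j assume "j \<in> {0..e}"
        show "(if j < k then DD k t (e - j) else 0) = 0"
        proof (cases "j < k")
          case True
          hence "e - j \<noteq> 0" using \<open>e = i\<close> ki by linarith
          thus ?thesis using t0 by (simp add: DD0)
        qed simp
      qed
      moreover have "hh k (i - k) e = 0" unfolding hh_def using \<open>e = i\<close> k ki by auto
      ultimately show ?thesis by simp
    next
      case False
      have "S = DD k (t - 1) e" unfolding SD using False k by (intro DDrec) auto
      moreover have "hh k (i - k) e = DD k (t - 1) e"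
      proof -
        have "i - k - e = k * t - k" using ie by simp
        also have "\<dots> = k * (t - 1)" by (simp add: diff_mult_distrib2)
        finally have "i - k - e = k * (t - 1)" .
        moreover have "e \<le> i - k"
        proof -
          have "k \<le> k * t" using False by simp
          thus ?thesis using ie True by linarith
        qed
        ultimately show ?thesis unfolding hh_def using k by auto
      qed
      ultimately show ?thesis by simp
    qed
  next
    case False
    have "S = 0" unfolding S_def
    proof (rule sum.neutral, intro ballI)
      fix j assume j: "j \<in> {0..e}"
      show "(if j < k then hh k (i - j) (e - j) else 0) = 0"
      proof (cases "j < k")
        case True
        have "i - j - (e - j) = i - e" using j by auto
        moreover have "\<not> (e - j \<le> i - j) \<or> e \<le> i" using j True ki by auto
        ultimately show ?thesis using False True j unfolding hh_def by auto
      qed simp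
    qed
    moreover have "\<not> (e \<le> i - k \<and> k dvd (i - k - e))"
    proof
      assume a: "e \<le> i - k \<and> k dvd (i - k - e)"
      hence "i - e = (i - k - e) + k" using ki by auto
      hence "k dvd (i - e)" using a by simp
      thus False using a ki False by auto
    qed
    hence "hh k (i - k) e = 0" unfolding hh_def by auto
    ultimately show ?thesis by simp
  qed
  show ?thesis using S1 S2 by simp
qed

declare Fneg.simps [simp del]

lemma Fneg_coeff:
  assumes k: "k \<ge> 2"
  shows "of_int (coeff (Fneg k i) e) = hh k i e"
proof (induction i arbitrary: e rule: less_induct)
  case (less i)
  show ?case
  proof (cases "i = 0")
    case True
    then show ?thesis by (subst Fneg.simps) (auto simp: hh_def DD0)
  next
    case i0: False
    show ?thesis
    proof (cases "i < k")
      case True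
      have "hh k i e = 0"
      proof (cases "e \<le> i \<and> k dvd (i - e)")
        case True2: True
        hence "i - e = 0" using True by (metis diff_le_self dvd_imp_le le_less_trans less_irrefl neq0_conv)
        hence "e = i" using True2 by auto
        thus ?thesis using i0 True2 unfolding hh_def by (simp add: DD0)
      qed (auto simp: hh_def)
      then show ?thesis using True i0 by (subst Fneg.simps) auto
    next
      case False
      have eq: "Fneg k i = Fneg k (i - k) - (\<Sum>j\<in>{1..k-1}. monom 1 j * Fneg k (i - j))"
        using False i0 k by (subst Fneg.simps) auto
      have "of_int (coeff (Fneg k i) e) = of_int (coeff (Fneg k (i - k)) e)
         - (\<Sum>j\<in>{1..k-1}. if j \<le> e then of_int (coeff (Fneg k (i - j)) (e - j)) else (0::rat))"
        unfolding eq coeff_diff coeff_sum coeff_monom_mult of_int_diff of_int_sum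
        by (simp add: if_distrib not_less) (intro sum.cong; auto)
      also have "\<dots> = hh k (i - k) e - (\<Sum>j\<in>{1..k-1}. if j \<le> e then hh k (i - j) (e - j) else 0)"
        using less.IH i0 False k by (auto intro!: sum.cong)
      also have "\<dots> = hh k i e" using hhrec[of k i e] k False by simp
      finally show ?thesis .
    qed
  qed
qed

theorem mainTheorem9:
  fixes k :: nat and n :: int
  assumes "k \<ge> 2" and "n \<le> - (int k - 1)"
  shows "map_poly (of_int :: int \<Rightarrow> rat) (F k n) =
    (\<Sum>t = 0..(nat \<bar>n\<bar> + 1 - k) div k.
        monom (C k (- (1 + int t)) (nat \<bar>n\<bar> + 1 - k * (1 + t))) (nat \<bar>n\<bar> + 1 - k * (1 + t)))"
proof -
  define i where "i = nat \<bar>n\<bar> + 1"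
  have ki: "k \<le> i" using assms unfolding i_def by linarith
  have Fi: "F k n = Fneg k i" unfolding F_def i_def using assms
    by (auto intro!: arg_cong[where f="Fneg k"])
  have CD: "C k (- (1 + int t)) m = DD k (1 + t) m" for t m
    unfolding C_def DD_def PP_def by (simp add: nat_add_distrib)
  show ?thesis
    unfolding Fi i_def[symmetric] CD
  proof (rule poly_eqI)
    fix e
    have L: "coeff (map_poly of_int (Fneg k i)) e = hh k i e"
      using Fneg_coeff[OF assms(1)] by (simp add: coeff_map_poly)
    have R: "coeff (\<Sum>t = 0..(i - k) div k. monom (DD k (1 + t) (i - k * (1 + t))) (i - k * (1 + t))) e
       = (\<Sum>t = 0..(i - k) div k. if e = i - k * (1 + t) then DD k (1 + t) e else 0)"
      unfolding coeff_sum coeff_monom by (auto intro!: sum.cong)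
    have rng: "k * (1 + t) \<le> i" if "t \<le> (i - k) div k" for t
    proof -
      have "k * t \<le> i - k" using that
        by (metis div_times_less_eq_dividend le_trans mult.commute mult_le_mono2)
      thus ?thesis using ki by (simp add: algebra_simps)
    qed
    have "(\<Sum>t = 0..(i - k) div k. if e = i - k * (1 + t) then DD k (1 + t) e else (0::rat)) = hh k i e"
    proof (cases "e \<le> i \<and> k dvd (i - e)")
      case True
      define t0 where "t0 = (i - e) div k"
      have ie: "i - e = k * t0" using True t0_def by auto
      show ?thesis
      proof (cases "t0 = 0")
        case True
        hence "e = i" using ie \<open>e \<le> i \<and> _\<close> by auto
        have "(\<Sum>t = 0..(i - k) div k. if e = i - k * (1 + t) then DD k (1 + t) e else (0::rat)) = 0"
        proof (rule sum.neutral, intro ballI)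
          fix t assume "t \<in> {0..(i - k) div k}"
          hence "k * (1 + t) \<le> i" using rng by auto
          moreover have "k * (1 + t) > 0" using assms by auto
          ultimately show "(if e = i - k * (1 + t) then DD k (1 + t) e else 0) = 0"
            using \<open>e = i\<close> by auto
        qed
        moreover have "hh k i e = 0" unfolding hh_def using \<open>e = i\<close> ki assms
          by (simp add: DD0)
        ultimately show ?thesis by simp
      next
        case False
        have cond: "(e = i - k * (1 + t)) = (t = t0 - 1)" if "t \<in> {0..(i - k) div k}" for t
        proof -
          have le: "k * (1 + t) \<le> i" using rng that by auto
          have "(e = i - k * (1 + t)) = (k * (1 + t) = k * t0)"
            using le ie \<open>e \<le> i \<and> _\<close> by auto
          also have "\<dots> = (1 + t = t0)" using assms by (subst mult_cancel1) simp
          also have "\<dots> = (t = t0 - 1)" using False by auto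
          finally show ?thesis .
        qed
        have t0r: "t0 - 1 \<in> {0..(i - k) div k}"
        proof -
          have "k * (t0 - 1) \<le> i - k" using ie False \<open>e \<le> i \<and> _\<close>
            by (simp add: diff_mult_distrib2)
          hence "t0 - 1 \<le> (i - k) div k" using assms
            by (metis div_le_mono nonzero_mult_div_cancel_left not_numeral_le_zero le_0_eq)
          thus ?thesis by simp
        qed
        have "(\<Sum>t = 0..(i - k) div k. if e = i - k * (1 + t) then DD k (1 + t) e else (0::rat))
            = (\<Sum>t = 0..(i - k) div k. if t = t0 - 1 then DD k (1 + t) e else 0)"
        proof (rule sum.cong[OF refl])
          fix t assume "t \<in> {0..(i - k) div k}"
          show "(if e = i - k * (1 + t) then DD k (1 + t) e else 0) =
              (if t = t0 - 1 then DD k (1 + t) e else 0)" by (simp only: cond[OF \<open>t \<in> _\<close>])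
        qed
        also have "\<dots> = DD k t0 e" using t0r False by (simp add: sum.delta)
        also have "\<dots> = hh k i e" unfolding hh_def using \<open>e \<le> i \<and> _\<close> t0_def by simp
        finally show ?thesis .
      qed
    next
      case False
      have "(\<Sum>t = 0..(i - k) div k. if e = i - k * (1 + t) then DD k (1 + t) e else (0::rat)) = 0"
      proof (rule sum.neutral, intro ballI)
        fix t assume "t \<in> {0..(i - k) div k}"
        hence le: "k * (1 + t) \<le> i" using rng by auto
        show "(if e = i - k * (1 + t) then DD k (1 + t) e else 0) = 0"
        proof (rule ccontr)
          assume "(if e = i - k * (1 + t) then DD k (1 + t) e else 0) \<noteq> 0"
          hence "e = i - k * (1 + t)" by (auto split: if_splits)
          hence "e \<le> i \<and> k dvd (i - e)" using le by auto
          thus False using False by simp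
        qed
      qed
      moreover have "hh k i e = 0" using False unfolding hh_def by auto
      ultimately show ?thesis by simp
    qed
    thus "coeff (map_poly of_int (Fneg k i)) e =
      coeff (\<Sum>t = 0..(i - k) div k. monom (DD k (1 + t) (i - k * (1 + t))) (i - k * (1 + t))) e"
      using L R by simp
  qed
qed

end
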